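(* Let $J_{mult}\subset dWHA$ be the subgroup spanned by all substitutions $\binom{\rho}{\sigma}$ such that some letter occurs at least twice in $\rho$ or at least twice in $\sigma$. Then $J_{mult}$ is a Hopf ideal of $(dWHA,m,\mu)$: $m(J_{mult}\otimes dWHA)+m(dWHA\otimes J_{mult})\subset J_{mult}$, $\mu(J_{mult})\subset J_{mult}\otimes dWHA+dWHA\otimes J_{mult}$, and $\varepsilon(J_{mult})=0$. Consequently the $\mathbf Z$-linear map $\psi:dWHA\to\varphi(MPR)$ that is the identity on substitutions with no repeated letter in either word and zero on substitutions in $J_{mult}$ is a Hopf algebra morphism and a Hopf algebra retraction of the inclusion $\varphi(MPR)\subset dWHA$.
   Context: Words are finite sequences of letters; $*$ denotes concatenation; the support $\mathrm{supp}(\alpha)$ of a word is the set of letters occurring in it. The shuffle product $\alpha\times_{sh}\beta$ of words $\alpha=[c_1,\dots,c_p]$, $\beta=[d_1,\dots,d_q]$ is the sum, with multiplicities, over all ways of choosing $p$ of the $p+q$ positions, of the word obtained by placing the $c$'s in their original order in the chosen positions and the $d$'s in their original order in the remaining ones. A subword of $[a_1,\dots,a_m]$ is a word $[a_{i_1},\dots,a_{i_r}]$ with $i_1<\dots<i_r$. Definition of $dWHA$: Let $\mathcal X$ be a countably infinite alphabet. A substitution is a pair $p=\binom{\rho}{\sigma}$ of words over $\mathcal X$ with $\mathrm{supp}(\rho)=\mathrm{supp}(\sigma)$, considered up to simultaneously renaming the letters of both words by a bijection of $\mathcal X$. $dWHA$ is the free abelian group with basis all substitutions (including the empty substitution $\binom{[\,]}{[\,]}$),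 graded by $\deg(p)=\#\mathrm{supp}(\rho)$. Multiplication: for substitutions $p=\binom{\rho}{\sigma}$, $p'=\binom{\rho'}{\sigma'}$ written with $\mathrm{supp}(\rho)\cap\mathrm{supp}(\rho')=\emptyset$, $m(p\otimes p')=\binom{\rho*\rho'}{\sigma\times_{sh}\sigma'}$, meaning the sum of $\binom{\rho*\rho'}{\gamma}$ over the terms $\gamma$ (with multiplicity) of $\sigma\times_{sh}\sigma'$. The unit is the empty substitution. A good cut of a word $\sigma$ is a factorization $\sigma=\sigma_1*\sigma_2$ with $\mathrm{supp}(\sigma_1)\cap\mathrm{supp}(\sigma_2)=\emptyset$ (the two trivial cuts included). Comultiplication: $\mu(p)=\sum \binom{p^{-1}(\sigma_1)}{\sigma_1}\otimes\binom{p^{-1}(\sigma_2)}{\sigma_2}$, summed over all good cuts $\sigma=\sigma_1*\sigma_2$, where $p^{-1}(\sigma_i)$ is the subword of $\rho$ consisting of all occurrences in $\rho$ of letters of $\mathrm{supp}(\sigma_i)$. Counit: $\varepsilon$ is $1$ on the empty substitution and $0$ on all other substitutions. This is a Hopf algebra. $\varphi(MPR)$ denotes the sub Hopf algebra of $dWHA$ spanned by the substitutions in which neither the top nor the bottom word has a repeated letter (it is the image of the Hopf algebra of permutations $MPR$ under $[t_1,\dots,t_n]\mapsto\binom{[x_1,\dots,x_n]}{[x_{t_1},\dots,x_{t_n}]}$). *)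

theory Defs
  imports "HOL-Library.Multiset"
begin

type_synonym subst = "nat list \<times> nat list"

definition valid_subst :: "subst \<Rightarrow> bool" where
  "valid_subst p \<longleftrightarrow> set (fst p) = set (snd p)"

text \<open>Canonical representative of the renaming class: letters renamed to 0,1,2,...
  in order of first occurrence in the top word.\<close>
definition rename_idx :: "nat list \<Rightarrow> nat \<Rightarrow> nat" where
  "rename_idx \<rho> a = length (takeWhile (\<lambda>b. b \<noteq> a) (remdups \<rho>))"

definition canon :: "subst \<Rightarrow> subst" where
  "canon p = (map (rename_idx (fst p)) (fst p), map (rename_idx (fst p)) (snd p))"

definition is_basis :: "subst \<Rightarrow> bool" where
  "is_basis p \<longleftrightarrow> valid_subst p \<and> canon p = p"

definition has_mult :: "subst \<Rightarrow> bool" where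
  "has_mult p \<longleftrightarrow> \<not> distinct (fst p) \<or> \<not> distinct (snd p)"

definition dWHA :: "(subst \<Rightarrow> int) set" where
  "dWHA = {x. finite {p. x p \<noteq> 0} \<and> (\<forall>p. x p \<noteq> 0 \<longrightarrow> is_basis p)}"

definition dWHA2 :: "(subst \<times> subst \<Rightarrow> int) set" where
  "dWHA2 = {z. finite {q. z q \<noteq> 0} \<and>
              (\<forall>p p'. z (p, p') \<noteq> 0 \<longrightarrow> is_basis p \<and> is_basis p')}"

definition delta :: "'a \<Rightarrow> 'a \<Rightarrow> int" where
  "delta p = (\<lambda>q. if q = p then 1 else 0)"

definition lin :: "('a \<Rightarrow> 'b \<Rightarrow> int) \<Rightarrow> ('a \<Rightarrow> int) \<Rightarrow> 'b \<Rightarrow> int" where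
  "lin F x = (\<lambda>q. \<Sum>p\<in>{p. x p \<noteq> 0}. x p * F p q)"

definition tens :: "('a \<Rightarrow> int) \<Rightarrow> ('b \<Rightarrow> int) \<Rightarrow> 'a \<times> 'b \<Rightarrow> int" where
  "tens x y = (\<lambda>(p, q). x p * y q)"

definition tens_map :: "(('a \<Rightarrow> int) \<Rightarrow> ('c \<Rightarrow> int)) \<Rightarrow> (('b \<Rightarrow> int) \<Rightarrow> ('d \<Rightarrow> int))
    \<Rightarrow> ('a \<times> 'b \<Rightarrow> int) \<Rightarrow> 'c \<times> 'd \<Rightarrow> int" where
  "tens_map f g z = lin (\<lambda>(p, q). tens (f (delta p)) (g (delta q))) z"

definition ms_vec :: "'a multiset \<Rightarrow> 'a \<Rightarrow> int" where
  "ms_vec M = (\<lambda>q. int (count M q))"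

fun shuffle_ms :: "'a list \<Rightarrow> 'a list \<Rightarrow> 'a list multiset" where
  "shuffle_ms [] ys = {#ys#}"
| "shuffle_ms xs [] = {#xs#}"
| "shuffle_ms (x # xs) (y # ys) =
     image_mset ((#) x) (shuffle_ms xs (y # ys)) + image_mset ((#) y) (shuffle_ms (x # xs) ys)"

definition shift_bound :: "subst \<Rightarrow> nat" where
  "shift_bound p = Suc (Max (insert 0 (set (fst p))))"

definition shift :: "nat \<Rightarrow> nat list \<Rightarrow> nat list" where
  "shift n w = map (\<lambda>a. a + n) w"

definition mult_basis :: "subst \<Rightarrow> subst \<Rightarrow> subst \<Rightarrow> int" where
  "mult_basis p p' = (let N = shift_bound p in
     ms_vec (image_mset (\<lambda>\<gamma>. canon (fst p @ shift N (fst p'), \<gamma>))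
                        (shuffle_ms (snd p) (shift N (snd p')))))"

definition hmult :: "(subst \<times> subst \<Rightarrow> int) \<Rightarrow> subst \<Rightarrow> int" where
  "hmult z = lin (\<lambda>(p, p'). mult_basis p p') z"

definition hunit :: "subst \<Rightarrow> int" where
  "hunit = delta ([], [])"

definition good_cut :: "nat list \<Rightarrow> nat \<Rightarrow> bool" where
  "good_cut \<sigma> k \<longleftrightarrow> k \<le> length \<sigma> \<and> set (take k \<sigma>) \<inter> set (drop k \<sigma>) = {}"

definition restr :: "nat list \<Rightarrow> nat list \<Rightarrow> subst" where
  "restr \<rho> \<sigma>' = canon (filter (\<lambda>a. a \<in> set \<sigma>') \<rho>, \<sigma>')"

definition comult_basis :: "subst \<Rightarrow> subst \<times> subst \<Rightarrow> int" where
  "comult_basis p = (\<lambda>q. \<Sum>k\<in>{k. good_cut (snd p) k}.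
      delta (restr (fst p) (take k (snd p)), restr (fst p) (drop k (snd p))) q)"

definition hcomult :: "(subst \<Rightarrow> int) \<Rightarrow> subst \<times> subst \<Rightarrow> int" where
  "hcomult x = lin comult_basis x"

definition hcounit :: "(subst \<Rightarrow> int) \<Rightarrow> int" where
  "hcounit x = x ([], [])"

definition J_mult :: "(subst \<Rightarrow> int) set" where
  "J_mult = {x \<in> dWHA. \<forall>p. x p \<noteq> 0 \<longrightarrow> has_mult p}"

definition J_tens_A :: "(subst \<times> subst \<Rightarrow> int) set" where
  "J_tens_A = {z \<in> dWHA2. \<forall>p q. z (p, q) \<noteq> 0 \<longrightarrow> has_mult p}"

definition A_tens_J :: "(subst \<times> subst \<Rightarrow> int) set" where
  "A_tens_J = {z \<in> dWHA2. \<forall>p q. z (p, q) \<noteq> 0 \<longrightarrow> has_mult q}"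

definition phi_MPR :: "(subst \<Rightarrow> int) set" where
  "phi_MPR = {x \<in> dWHA. \<forall>p. x p \<noteq> 0 \<longrightarrow> \<not> has_mult p}"

definition psi :: "(subst \<Rightarrow> int) \<Rightarrow> subst \<Rightarrow> int" where
  "psi x = (\<lambda>p. if has_mult p then 0 else x p)"

end

theory Submission imports Defs begin

lemma tw_nth_distinct: "distinct xs \<Longrightarrow> i < length xs \<Longrightarrow> length (takeWhile (\<lambda>b. b \<noteq> xs!i) xs) = i"
proof (induction xs arbitrary: i)
  case Nil then show ?case by simp
next
  case (Cons a xs) then show ?case
    by (cases i) (auto simp: nth_mem)
qed

lemma tw_less: "a \<in> set xs \<Longrightarrow> length (takeWhile (\<lambda>b. b \<noteq> a) xs) < length xs"
  by (induction xs) auto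

lemma rename_idx_lt: "a \<in> set \<rho> \<Longrightarrow> rename_idx \<rho> a < length (remdups \<rho>)"
  unfolding rename_idx_def by (rule tw_less) simp

lemma rename_idx_nth: "a \<in> set \<rho> \<Longrightarrow> remdups \<rho> ! rename_idx \<rho> a = a"
  using nth_length_takeWhile[of "\<lambda>b. b \<noteq> a" "remdups \<rho>"] rename_idx_lt[of a \<rho>]
  unfolding rename_idx_def by simp

lemma rename_inj: "inj_on (rename_idx \<rho>) (set \<rho>)"
  by (metis inj_onI rename_idx_nth)

lemma rename_of_nth: "i < length (remdups \<rho>) \<Longrightarrow> rename_idx \<rho> (remdups \<rho> ! i) = i"
  unfolding rename_idx_def by (rule tw_nth_distinct) auto

lemma map_rename_remdups: "map (rename_idx \<rho>) (remdups \<rho>) = [0..<length (remdups \<rho>)]"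
  by (rule nth_equalityI) (auto simp: rename_of_nth)

lemma remdups_map_inj: "inj_on f (set xs) \<Longrightarrow> remdups (map f xs) = map f (remdups xs)"
  by (induction xs) (auto simp: inj_on_def)

lemma rename_idem:
  assumes "b \<in> set (map (rename_idx \<rho>) \<rho>)"
  shows "rename_idx (map (rename_idx \<rho>) \<rho>) b = b"
proof -
  let ?n = "length (remdups \<rho>)"
  have rd: "remdups (map (rename_idx \<rho>) \<rho>) = [0..<?n]"
    using remdups_map_inj[OF rename_inj] map_rename_remdups by simp
  have "b < ?n" using assms rename_idx_lt by auto
  then show ?thesis unfolding rename_idx_def rd
    using tw_nth_distinct[of "[0..<?n]" b] by simp
qed

lemma canon_basis: "valid_subst q \<Longrightarrow> is_basis (canon q)"
proof -
  assume v: "valid_subst q"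
  obtain \<rho> \<sigma> where q: "q = (\<rho>, \<sigma>)" by fastforce
  have s: "set \<sigma> = set \<rho>" using v q by (simp add: valid_subst_def)
  let ?r = "rename_idx \<rho>"
  have c: "canon q = (map ?r \<rho>, map ?r \<sigma>)" by (simp add: canon_def q)
  have "map (rename_idx (map ?r \<rho>)) (map ?r \<rho>) = map ?r \<rho>"
    by (rule map_idI) (simp add: rename_idem del: set_map)
  moreover have "map (rename_idx (map ?r \<rho>)) (map ?r \<sigma>) = map ?r \<sigma>"
    by (rule map_idI) (metis rename_idem s set_map)
  ultimately have "canon (canon q) = canon q" unfolding c by (simp add: canon_def)
  moreover have "valid_subst (canon q)" using s unfolding c valid_subst_def by simp
  ultimately show ?thesis by (simp add: is_basis_def)
qed

lemma canon_hm: "valid_subst q \<Longrightarrow> has_mult (canon q) = has_mult q"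
  using rename_inj[of "fst q"]
  by (auto simp: valid_subst_def has_mult_def canon_def distinct_map)

lemma shuffle_mset: "\<gamma> \<in># shuffle_ms xs ys \<Longrightarrow> mset \<gamma> = mset xs + mset ys"
  by (induction xs ys arbitrary: \<gamma> rule: shuffle_ms.induct) auto


lemma distinct_shuffle:
  assumes "\<gamma> \<in># shuffle_ms xs ys"
  shows "distinct \<gamma> = distinct (xs @ ys)" "set \<gamma> = set xs \<union> set ys"
proof -
  have m: "mset \<gamma> = mset (xs @ ys)" using shuffle_mset[OF assms] by simp
  show "distinct \<gamma> = distinct (xs @ ys)" by (rule mset_eq_imp_distinct_iff[OF m])
  show "set \<gamma> = set xs \<union> set ys" using mset_eq_setD[OF m] by simp
qed

lemma shift_bound_gt: "a \<in> set (fst p) \<Longrightarrow> a < shift_bound p"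
  unfolding shift_bound_def by (simp add: le_imp_less_Suc)

lemma mb_hm:
  assumes p: "is_basis p" and p': "is_basis p'" and nz: "mult_basis p p' q \<noteq> 0"
  shows "is_basis q \<and> (has_mult q \<longleftrightarrow> has_mult p \<or> has_mult p')"
proof -
  define N where "N = shift_bound p"
  let ?A = "fst p @ shift N (fst p')"
  have "q \<in># image_mset (\<lambda>\<gamma>. canon (?A, \<gamma>)) (shuffle_ms (snd p) (shift N (snd p')))"
    using nz unfolding mult_basis_def Let_def ms_vec_def N_def by (auto simp: count_eq_zero_iff)
  then obtain \<gamma> where g: "\<gamma> \<in># shuffle_ms (snd p) (shift N (snd p'))" and q: "q = canon (?A, \<gamma>)"
    by auto
  have sp: "set (fst p) = set (snd p)" and sp': "set (fst p') = set (snd p')"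
    using p p' by (auto simp: is_basis_def valid_subst_def)
  have v: "valid_subst (?A, \<gamma>)"
    using distinct_shuffle(2)[OF g] sp sp' by (simp add: valid_subst_def shift_def)
  have disj1: "set (fst p) \<inter> set (shift N (fst p')) = {}"
    using shift_bound_gt[of _ p] by (auto simp: shift_def N_def)
  have disj2: "set (snd p) \<inter> set (shift N (snd p')) = {}" using disj1 sp sp' by (simp add: shift_def)
  have inj: "inj_on (\<lambda>a. a + N) X" for X by (simp add: inj_on_def)
  have "has_mult (?A, \<gamma>) \<longleftrightarrow> has_mult p \<or> has_mult p'"
    using distinct_shuffle(1)[OF g] disj1 disj2 inj
    by (auto simp: has_mult_def shift_def distinct_map)
  then show ?thesis using canon_basis[OF v] canon_hm[OF v] q by simp
qed

lemma distinct_filter_split: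
  assumes "set \<rho> \<subseteq> T \<union> D" "T \<inter> D = {}"
  shows "distinct \<rho> \<longleftrightarrow> distinct (filter (\<lambda>a. a \<in> T) \<rho>) \<and> distinct (filter (\<lambda>a. a \<in> D) \<rho>)"
proof -
  have f: "filter (\<lambda>a. a \<in> D) \<rho> = filter (\<lambda>a. \<not> a \<in> T) \<rho>"
    using assms by (intro filter_cong) auto
  have m: "mset \<rho> = mset (filter (\<lambda>a. a \<in> T) \<rho> @ filter (\<lambda>a. \<not> a \<in> T) \<rho>)"
    by (simp add: mset_filter multiset_partition)
  show ?thesis unfolding f mset_eq_imp_distinct_iff[OF m] by auto
qed

lemma cb_nz:
  assumes "comult_basis p q \<noteq> 0"
  shows "\<exists>k. good_cut (snd p) k \<and> q = (restr (fst p) (take k (snd p)), restr (fst p) (drop k (snd p)))"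
proof -
  have "finite {k. good_cut (snd p) k}" by (simp add: good_cut_def)
  from assms have "(\<Sum>k\<in>{k. good_cut (snd p) k}.
      delta (restr (fst p) (take k (snd p)), restr (fst p) (drop k (snd p))) q) \<noteq> 0"
    by (simp add: comult_basis_def)
  then obtain k where "k \<in> {k. good_cut (snd p) k}"
    "delta (restr (fst p) (take k (snd p)), restr (fst p) (drop k (snd p))) q \<noteq> 0"
    using sum.not_neutral_contains_not_neutral by blast
  then show ?thesis by (auto simp: delta_def split: if_splits)
qed

lemma restr_props:
  assumes "set s \<subseteq> set \<rho>"
  shows "is_basis (restr \<rho> s) \<and> (has_mult (restr \<rho> s) \<longleftrightarrow>
           \<not> distinct (filter (\<lambda>a. a \<in> set s) \<rho>) \<or> \<not> distinct s)"
proof -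
  have v: "valid_subst (filter (\<lambda>a. a \<in> set s) \<rho>, s)"
    using assms by (auto simp: valid_subst_def)
  show ?thesis using canon_basis[OF v] canon_hm[OF v] unfolding restr_def
    by (simp add: has_mult_def)
qed

lemma cb_hm:
  assumes p: "valid_subst p" and nz: "comult_basis p (q1, q2) \<noteq> 0"
  shows "is_basis q1 \<and> is_basis q2 \<and> (has_mult p \<longleftrightarrow> has_mult q1 \<or> has_mult q2)"
proof -
  obtain \<rho> \<sigma> where pp: "p = (\<rho>, \<sigma>)" by fastforce
  have s: "set \<rho> = set \<sigma>" using p pp by (simp add: valid_subst_def)
  obtain k where k: "good_cut \<sigma> k" and q1: "q1 = restr \<rho> (take k \<sigma>)" and q2: "q2 = restr \<rho> (drop k \<sigma>)"
    using cb_nz[OF nz] pp by auto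
  have disj: "set (take k \<sigma>) \<inter> set (drop k \<sigma>) = {}" using k by (simp add: good_cut_def)
  have un: "set \<sigma> = set (take k \<sigma>) \<union> set (drop k \<sigma>)"
    by (metis append_take_drop_id set_append)
  have r1: "set (take k \<sigma>) \<subseteq> set \<rho>" and r2: "set (drop k \<sigma>) \<subseteq> set \<rho>"
    using s un by auto
  have ds: "distinct \<sigma> \<longleftrightarrow> distinct (take k \<sigma>) \<and> distinct (drop k \<sigma>)"
    using disj by (metis append_take_drop_id distinct_append)
  have sub: "set \<rho> \<subseteq> set (take k \<sigma>) \<union> set (drop k \<sigma>)" using s un by simp
  have dr: "distinct \<rho> \<longleftrightarrow> distinct (filter (\<lambda>a. a \<in> set (take k \<sigma>)) \<rho>) \<and> distinct (filter (\<lambda>a. a \<in> set (drop k \<sigma>)) \<rho>)"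
    using distinct_filter_split[OF sub disj] .
  have h1: "is_basis q1" "has_mult q1 \<longleftrightarrow> \<not> distinct (filter (\<lambda>a. a \<in> set (take k \<sigma>)) \<rho>) \<or> \<not> distinct (take k \<sigma>)"
    using restr_props[OF r1] q1 by simp_all
  have h2: "is_basis q2" "has_mult q2 \<longleftrightarrow> \<not> distinct (filter (\<lambda>a. a \<in> set (drop k \<sigma>)) \<rho>) \<or> \<not> distinct (drop k \<sigma>)"
    using restr_props[OF r2] q2 by simp_all
  have h: "has_mult p \<longleftrightarrow> \<not> distinct \<rho> \<or> \<not> distinct \<sigma>" by (simp add: pp has_mult_def)
  show ?thesis using h1 h2 h ds dr by blast
qed

lemma lin_nz: "lin F x q \<noteq> 0 \<Longrightarrow> \<exists>p. x p \<noteq> 0 \<and> F p q \<noteq> 0"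
proof -
  assume "lin F x q \<noteq> 0"
  then have "(\<Sum>p\<in>{p. x p \<noteq> 0}. x p * F p q) \<noteq> 0" by (simp add: lin_def)
  then obtain p where "p \<in> {p. x p \<noteq> 0}" "x p * F p q \<noteq> 0"
    using sum.not_neutral_contains_not_neutral by blast
  then show ?thesis by auto
qed

lemma lin_finite:
  assumes "finite {p. x p \<noteq> 0}" "\<And>p. x p \<noteq> 0 \<Longrightarrow> finite {q. F p q \<noteq> 0}"
  shows "finite {q. lin F x q \<noteq> 0}"
proof -
  have "{q. lin F x q \<noteq> 0} \<subseteq> (\<Union>p\<in>{p. x p \<noteq> 0}. {q. F p q \<noteq> 0})"
  proof
    fix q assume "q \<in> {q. lin F x q \<noteq> 0}"
    then have "lin F x q \<noteq> 0" by simp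
    then obtain p where "x p \<noteq> 0" "F p q \<noteq> 0" using lin_nz[of F x q] by blast
    then show "q \<in> (\<Union>p\<in>{p. x p \<noteq> 0}. {q. F p q \<noteq> 0})" by blast
  qed
  moreover have "finite (\<Union>p\<in>{p. x p \<noteq> 0}. {q. F p q \<noteq> 0})"
    using assms by (intro finite_UN_I) auto
  ultimately show ?thesis by (rule finite_subset)
qed

lemma lin_sup:
  assumes "finite S" "{p. x p \<noteq> 0} \<subseteq> S"
  shows "lin F x q = (\<Sum>p\<in>S. x p * F p q)"
  unfolding lin_def using assms by (intro sum.mono_neutral_left) auto

lemma mb_finite: "finite {q. mult_basis p p' q \<noteq> 0}"
proof -
  have "{q. mult_basis p p' q \<noteq> 0} \<subseteq> set_mset (image_mset (\<lambda>\<gamma>. canon (fst p @ shift (shift_bound p) (fst p'), \<gamma>))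
           (shuffle_ms (snd p) (shift (shift_bound p) (snd p'))))"
    unfolding mult_basis_def Let_def ms_vec_def by (auto simp: count_eq_zero_iff)
  then show ?thesis using finite_subset by blast
qed

lemma cb_finite: "finite {q. comult_basis p q \<noteq> 0}"
proof -
  have "{q. comult_basis p q \<noteq> 0} \<subseteq> (\<lambda>k. (restr (fst p) (take k (snd p)), restr (fst p) (drop k (snd p)))) ` {..length (snd p)}"
    using cb_nz by (fastforce simp: good_cut_def)
  then show ?thesis using finite_subset by blast
qed

lemma tens_map_psi:
  assumes "finite {r. z r \<noteq> 0}"
  shows "tens_map psi psi z r = (if has_mult (fst r) \<or> has_mult (snd r) then 0 else z r)"
proof -
  have t: "z pq * (case pq of (p, q) \<Rightarrow> tens (psi (delta p)) (psi (delta q))) r =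
      (if pq = r then (if has_mult (fst r) \<or> has_mult (snd r) then 0 else z r) else 0)" for pq
    by (cases pq; cases r) (auto simp: tens_def psi_def delta_def)
  show ?thesis unfolding tens_map_def lin_def t using assms by simp
qed


lemma hmult_nz:
  assumes z: "z \<in> dWHA2" and nz: "hmult z q \<noteq> 0"
  shows "\<exists>p p'. z (p, p') \<noteq> 0 \<and> is_basis q \<and> (has_mult q \<longleftrightarrow> has_mult p \<or> has_mult p')"
proof -
  obtain r where r: "z r \<noteq> 0" "(case r of (p, p') \<Rightarrow> mult_basis p p') q \<noteq> 0"
    using lin_nz[of "\<lambda>(p, p'). mult_basis p p'" z q] nz by (auto simp: hmult_def)
  obtain p p' where rp: "r = (p, p')" by (cases r)
  have "z (p, p') \<noteq> 0" using r rp by simp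
  then have "is_basis p \<and> is_basis p'" using z unfolding dWHA2_def by blast
  then have b: "is_basis p" "is_basis p'" by simp_all
  have "is_basis q \<and> (has_mult q \<longleftrightarrow> has_mult p \<or> has_mult p')" using mb_hm[OF b, of q] r rp by simp
  then show ?thesis using \<open>z (p, p') \<noteq> 0\<close> by blast
qed

lemma hmult_fin: "z \<in> dWHA2 \<Longrightarrow> finite {q. hmult z q \<noteq> 0}"
  unfolding hmult_def
  by (rule lin_finite) (auto simp: dWHA2_def mb_finite split: prod.splits)

lemma hcomult_nz:
  assumes x: "x \<in> dWHA" and nz: "hcomult x (q1, q2) \<noteq> 0"
  shows "\<exists>p. x p \<noteq> 0 \<and> is_basis q1 \<and> is_basis q2 \<and> (has_mult p \<longleftrightarrow> has_mult q1 \<or> has_mult q2)"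
proof -
  obtain p where p: "x p \<noteq> 0" "comult_basis p (q1, q2) \<noteq> 0"
    using lin_nz[of comult_basis x "(q1, q2)"] nz by (auto simp: hcomult_def)
  have "is_basis p" using x p unfolding dWHA_def by blast
  then have "valid_subst p" by (simp add: is_basis_def)
  then show ?thesis using cb_hm p by blast
qed

lemma hcomult_fin: "x \<in> dWHA \<Longrightarrow> finite {q. hcomult x q \<noteq> 0}"
  unfolding hcomult_def
  by (rule lin_finite) (auto simp: dWHA_def cb_finite)

lemma part1: "z \<in> J_tens_A \<Longrightarrow> hmult z \<in> J_mult"
proof -
  assume zJ: "z \<in> J_tens_A"
  then have z: "z \<in> dWHA2" by (simp add: J_tens_A_def)
  have "is_basis q \<and> has_mult q" if "hmult z q \<noteq> 0" for q
    using hmult_nz[OF z that] zJ by (auto simp: J_tens_A_def)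
  then show ?thesis using hmult_fin[OF z] by (auto simp: J_mult_def dWHA_def)
qed

lemma part1b: "z \<in> A_tens_J \<Longrightarrow> hmult z \<in> J_mult"
proof -
  assume zJ: "z \<in> A_tens_J"
  then have z: "z \<in> dWHA2" by (simp add: A_tens_J_def)
  have "is_basis q \<and> has_mult q" if "hmult z q \<noteq> 0" for q
    using hmult_nz[OF z that] zJ by (auto simp: A_tens_J_def)
  then show ?thesis using hmult_fin[OF z] by (auto simp: J_mult_def dWHA_def)
qed

lemma part2:
  assumes xJ: "x \<in> J_mult"
  shows "hcomult x \<in> {(\<lambda>q. a q + b q) | a b. a \<in> J_tens_A \<and> b \<in> A_tens_J}"
proof -
  have x: "x \<in> dWHA" using xJ by (simp add: J_mult_def)
  define y where "y = hcomult x"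
  define a where "a = (\<lambda>r. if has_mult (fst r) then y r else 0)"
  define b where "b = (\<lambda>r. if has_mult (fst r) then 0 else y r)"
  have fy: "finite {r. y r \<noteq> 0}" using hcomult_fin[OF x] by (simp add: y_def)
  have ny: "is_basis q1 \<and> is_basis q2 \<and> (has_mult q1 \<or> has_mult q2)" if "y (q1, q2) \<noteq> 0" for q1 q2
    using hcomult_nz[OF x] that xJ by (fastforce simp: y_def J_mult_def)
  have "{r. a r \<noteq> 0} \<subseteq> {r. y r \<noteq> 0}" by (auto simp: a_def)
  then have fa: "finite {r. a r \<noteq> 0}" using fy finite_subset by blast
  have a1: "is_basis p \<and> is_basis q" and a2: "has_mult p" if "a (p, q) \<noteq> 0" for p q
    using that ny[of p q] by (simp_all add: a_def split: if_splits)
  have "a \<in> J_tens_A" unfolding J_tens_A_def dWHA2_def using fa a1 a2 by blast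
  moreover have "{r. b r \<noteq> 0} \<subseteq> {r. y r \<noteq> 0}" by (auto simp: b_def)
  then have fb: "finite {r. b r \<noteq> 0}" using fy finite_subset by blast
  have b1: "is_basis p \<and> is_basis q" and b2: "has_mult q" if "b (p, q) \<noteq> 0" for p q
    using that ny[of p q] by (simp_all add: b_def split: if_splits)
  have "b \<in> A_tens_J" unfolding A_tens_J_def dWHA2_def using fb b1 b2 by blast
  moreover have "hcomult x = (\<lambda>q. a q + b q)" by (auto simp: a_def b_def y_def)
  ultimately show ?thesis by blast
qed

lemma part5:
  assumes z: "z \<in> dWHA2"
  shows "psi (hmult z) = hmult (tens_map psi psi z)"
proof
  fix q
  define S where "S = {r. z r \<noteq> 0}"
  define F where "F = (\<lambda>r. (case r of (p, p') \<Rightarrow> mult_basis p p') q)"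
  let ?z' = "tens_map psi psi z"
  have fS: "finite S" using z by (simp add: S_def dWHA2_def)
  have z': "?z' r = (if has_mult (fst r) \<or> has_mult (snd r) then 0 else z r)" for r
    using tens_map_psi fS by (simp add: S_def)
  have sub: "{r. ?z' r \<noteq> 0} \<subseteq> S" by (auto simp: z' S_def)
  have key: "F r \<noteq> 0 \<Longrightarrow> (has_mult q \<longleftrightarrow> has_mult (fst r) \<or> has_mult (snd r))" if "r \<in> S" for r
  proof -
    obtain p p' where rp: "r = (p, p')" by (cases r)
    have "z (p, p') \<noteq> 0" using that rp by (simp add: S_def)
    then have "is_basis p \<and> is_basis p'" using z unfolding dWHA2_def by blast
    then have b: "is_basis p" "is_basis p'" by simp_all
    assume "F r \<noteq> 0"
    then show ?thesis using mb_hm[OF b, of q] rp by (simp add: F_def)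
  qed
  have "psi (hmult z) q = (\<Sum>r\<in>S. if has_mult q then 0 else z r * F r)"
    by (simp add: psi_def hmult_def lin_def S_def F_def)
  also have "\<dots> = (\<Sum>r\<in>S. ?z' r * F r)"
  proof (rule sum.cong)
    fix r assume "r \<in> S"
    then show "(if has_mult q then 0 else z r * F r) = ?z' r * F r"
      using key[of r] by (cases "F r = 0") (auto simp: z')
  qed simp
  also have "\<dots> = hmult ?z' q"
    unfolding hmult_def F_def by (rule lin_sup[OF fS sub, symmetric])
  finally show "psi (hmult z) q = hmult ?z' q" .
qed

lemma part7:
  assumes x: "x \<in> dWHA"
  shows "hcomult (psi x) = tens_map psi psi (hcomult x)"
proof
  fix r :: "subst \<times> subst"
  obtain r1 r2 where rr: "r = (r1, r2)" by (cases r)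
  define S where "S = {p. x p \<noteq> 0}"
  have fS: "finite S" using x by (simp add: S_def dWHA_def)
  have sub: "{p. psi x p \<noteq> 0} \<subseteq> S" by (auto simp: psi_def S_def)
  have key: "comult_basis p r \<noteq> 0 \<Longrightarrow> (has_mult p \<longleftrightarrow> has_mult r1 \<or> has_mult r2)" if "p \<in> S" for p
  proof -
    have "valid_subst p" using x that unfolding dWHA_def S_def is_basis_def by blast
    moreover assume "comult_basis p r \<noteq> 0"
    ultimately show ?thesis using cb_hm rr by blast
  qed
  have "hcomult (psi x) r = (\<Sum>p\<in>S. psi x p * comult_basis p r)"
    unfolding hcomult_def by (rule lin_sup[OF fS sub])
  also have "\<dots> = (\<Sum>p\<in>S. if has_mult r1 \<or> has_mult r2 then 0 else x p * comult_basis p r)"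
  proof (rule sum.cong)
    fix p assume "p \<in> S"
    then show "psi x p * comult_basis p r = (if has_mult r1 \<or> has_mult r2 then 0 else x p * comult_basis p r)"
      using key[of p] by (cases "comult_basis p r = 0") (auto simp: psi_def)
  qed simp
  also have "\<dots> = tens_map psi psi (hcomult x) r"
    using tens_map_psi[OF hcomult_fin[OF x]] rr
    by (simp add: hcomult_def lin_def S_def)
  finally show "hcomult (psi x) r = tens_map psi psi (hcomult x) r" .
qed

theorem mainTheorem8:
  shows "(\<forall>z \<in> J_tens_A. hmult z \<in> J_mult)
       \<and> (\<forall>z \<in> A_tens_J. hmult z \<in> J_mult)
       \<and> (\<forall>x \<in> J_mult. hcomult x \<in> {(\<lambda>q. a q + b q) | a b. a \<in> J_tens_A \<and> b \<in> A_tens_J})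
       \<and> (\<forall>x \<in> J_mult. hcounit x = 0)
       \<and> (\<forall>z \<in> dWHA2. psi (hmult z) = hmult (tens_map psi psi z))
       \<and> psi hunit = hunit
       \<and> (\<forall>x \<in> dWHA. hcomult (psi x) = tens_map psi psi (hcomult x))
       \<and> (\<forall>x \<in> dWHA. hcounit (psi x) = hcounit x)
       \<and> psi ` dWHA \<subseteq> phi_MPR
       \<and> (\<forall>x \<in> phi_MPR. psi x = x)"
proof (intro conjI ballI)
  show "hmult z \<in> J_mult" if "z \<in> J_tens_A" for z using part1 that .
  show "hmult z \<in> J_mult" if "z \<in> A_tens_J" for z using part1b that .
  show "hcomult x \<in> {(\<lambda>q. a q + b q) | a b. a \<in> J_tens_A \<and> b \<in> A_tens_J}" if "x \<in> J_mult" for x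
    using part2 that .
  show "hcounit x = 0" if "x \<in> J_mult" for x
  proof -
    have "\<not> has_mult ([], [])" by (simp add: has_mult_def)
    then show ?thesis using that unfolding J_mult_def hcounit_def by blast
  qed
  show "psi (hmult z) = hmult (tens_map psi psi z)" if "z \<in> dWHA2" for z using part5 that .
  show "psi hunit = hunit" by (auto simp: psi_def hunit_def delta_def has_mult_def)
  show "hcomult (psi x) = tens_map psi psi (hcomult x)" if "x \<in> dWHA" for x using part7 that .
  show "hcounit (psi x) = hcounit x" for x by (simp add: hcounit_def psi_def has_mult_def)
  show "psi ` dWHA \<subseteq> phi_MPR"
  proof
    fix y assume "y \<in> psi ` dWHA"
    then obtain x where x: "x \<in> dWHA" "y = psi x" by blast
    have "{p. psi x p \<noteq> 0} \<subseteq> {p. x p \<noteq> 0}" by (auto simp: psi_def)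
    then have f: "finite {p. psi x p \<noteq> 0}" using x finite_subset unfolding dWHA_def by blast
    have h: "is_basis p \<and> \<not> has_mult p" if "psi x p \<noteq> 0" for p
    proof -
      have "\<not> has_mult p" "x p \<noteq> 0" using that by (simp_all add: psi_def split: if_splits)
      then show ?thesis using x unfolding dWHA_def by blast
    qed
    show "y \<in> phi_MPR" unfolding phi_MPR_def dWHA_def using f h x(2) by blast
  qed
  show "psi x = x" if "x \<in> phi_MPR" for x
  proof (rule ext)
    fix p
    have "x p \<noteq> 0 \<Longrightarrow> \<not> has_mult p" using that unfolding phi_MPR_def by blast
    then show "psi x p = x p" unfolding psi_def by (cases "x p = 0") auto
  qed
qed

end
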